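(* Let $\varepsilon,K>0$ be constants and let $k\geq 2/\varepsilon$ be an integer. Let $n$ be sufficiently large in terms of $\varepsilon,K,k$ and let $G$ be an $n$-vertex graph with $e(G)\geq\frac16 n^{4/3+\varepsilon}$ and $\Delta(G)\leq Kn^{1/3+\varepsilon}$ in which every edge is contained in at most $n^{1/3+2\varepsilon}$ copies of $C_4$. Then $G$ has at least $6^{-2k}n^{(1/3+\varepsilon)2k}$ homomorphic $2k$-cycles $(x_1,\dots,x_{2k})$ such that $x_1,\dots,x_{2k}$ are distinct and $d(x_i,x_{i+2})\leq n^{2\varepsilon}$ for each $1\leq i\leq 2k$ (indices modulo $2k$).
   Context: A homomorphic $2k$-cycle is a tuple $(x_1,\dots,x_{2k})\in V(G)^{2k}$ with $x_ix_{i+1}\in E(G)$ for all $i$ (indices mod $2k$). $d(u,v)$ denotes the codegree, i.e. the number of common neighbours of $u$ and $v$. A copy of $C_4$ is a subgraph isomorphic to the $4$-cycle. *)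

theory Defs
  imports "HOL-Analysis.Analysis" "HOL-Library.FuncSet"
begin

definition simple_graph :: "'a set \<Rightarrow> ('a \<Rightarrow> 'a \<Rightarrow> bool) \<Rightarrow> bool" where
  "simple_graph V E \<longleftrightarrow> finite V \<and> (\<forall>u v. E u v \<longrightarrow> u \<in> V \<and> v \<in> V)
     \<and> (\<forall>u v. E u v \<longrightarrow> E v u) \<and> (\<forall>v. \<not> E v v)"

definition edges :: "'a set \<Rightarrow> ('a \<Rightarrow> 'a \<Rightarrow> bool) \<Rightarrow> 'a set set" where
  "edges V E = {{u, v} | u v. u \<in> V \<and> v \<in> V \<and> E u v}"

definition degree :: "'a set \<Rightarrow> ('a \<Rightarrow> 'a \<Rightarrow> bool) \<Rightarrow> 'a \<Rightarrow> nat" where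
  "degree V E v = card {u \<in> V. E v u}"

definition codegree :: "'a set \<Rightarrow> ('a \<Rightarrow> 'a \<Rightarrow> bool) \<Rightarrow> 'a \<Rightarrow> 'a \<Rightarrow> nat" where
  "codegree V E u v = card {w \<in> V. E u w \<and> E v w}"

definition C4_copies :: "'a set \<Rightarrow> ('a \<Rightarrow> 'a \<Rightarrow> bool) \<Rightarrow> 'a set set set" where
  "C4_copies V E = {{{a, b}, {b, c}, {c, d}, {d, a}} | a b c d.
      a \<in> V \<and> b \<in> V \<and> c \<in> V \<and> d \<in> V \<and> distinct [a, b, c, d]
      \<and> E a b \<and> E b c \<and> E c d \<and> E d a}"

definition hom_cycles :: "'a set \<Rightarrow> ('a \<Rightarrow> 'a \<Rightarrow> bool) \<Rightarrow> nat \<Rightarrow> (nat \<Rightarrow> 'a) set" where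
  "hom_cycles V E m = {x \<in> {0..<m} \<rightarrow>\<^sub>E V. \<forall>i<m. E (x i) (x ((i + 1) mod m))}"

end

theory Submission
  imports Defs
begin

primrec wk :: "'a set \<Rightarrow> ('a\<Rightarrow>'a\<Rightarrow>bool) \<Rightarrow> nat \<Rightarrow> 'a \<Rightarrow> 'a \<Rightarrow> real" where
  "wk V E 0 u v = (if u = v then 1 else 0)"
| "wk V E (Suc m) u v = (\<Sum>z\<in>V. wk V E m u z * (if E z v then 1 else 0))"

declare wk.simps(2)[simp del]

locale sg =
  fixes V :: "'a set" and E :: "'a \<Rightarrow> 'a \<Rightarrow> bool"
  assumes sg: "simple_graph V E"
begin

lemma finV: "finite V" using sg by (simp add: simple_graph_def)
lemma EV: "E u v \<Longrightarrow> u \<in> V \<and> v \<in> V" using sg by (simp add: simple_graph_def)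
lemma Esym: "E u v \<Longrightarrow> E v u" using sg by (simp add: simple_graph_def)
lemma Eirr: "\<not> E v v" using sg by (simp add: simple_graph_def)

abbreviation W where "W \<equiv> wk V E"

lemma W_nonneg: "W m u v \<ge> 0"
  by (induction m arbitrary: v) (auto simp: wk.simps intro!: sum_nonneg)

lemma W_comp: "v \<in> V \<Longrightarrow> W (a + b) u v = (\<Sum>z\<in>V. W a u z * W b z v)"
proof (induction b arbitrary: v)
  case 0
  then show ?case using finV by (simp add: if_distrib cong: if_cong)
next
  case (Suc b)
  have "W (a + Suc b) u v = (\<Sum>z\<in>V. W (a+b) u z * (if E z v then 1 else 0))" by (simp add: wk.simps)
  also have "\<dots> = (\<Sum>z\<in>V. (\<Sum>y\<in>V. W a u y * W b y z) * (if E z v then 1 else 0))"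
    using Suc.IH by (intro sum.cong) auto
  also have "\<dots> = (\<Sum>y\<in>V. W a u y * (\<Sum>z\<in>V. W b y z * (if E z v then 1 else 0)))"
    by (simp add: sum_distrib_left sum_distrib_right mult.assoc) (rule sum.swap)
  finally show ?case by (simp add: wk.simps)
qed

lemma W1: assumes "u \<in> V" shows "W (Suc 0) u v = (if E u v then 1 else 0)"
proof -
  have "W (Suc 0) u v = (\<Sum>z\<in>V. if z = u then (if E u v then 1 else 0) else 0)"
    unfolding wk.simps by (intro sum.cong) auto
  then show ?thesis using finV assms by simp
qed

lemma W_sym: "u \<in> V \<Longrightarrow> v \<in> V \<Longrightarrow> W m u v = W m v u"
proof (induction m arbitrary: u v)
  case 0 then show ?case by simp
next
  case (Suc m)
  have "W (Suc m) u v = W (1 + m) u v" by simp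
  also have "\<dots> = (\<Sum>z\<in>V. W (Suc 0) u z * W m z v)" using W_comp[of v 1 m u] Suc by simp
  also have "\<dots> = (\<Sum>z\<in>V. W m v z * (if E z u then 1 else 0))"
    using Suc by (intro sum.cong) (auto simp del: wk.simps simp add: W1 Esym)
  finally show ?case by (simp add: wk.simps)
qed

end

lemma lc_step:
  fixes s :: "nat \<Rightarrow> real"
  assumes nn: "\<And>j. s j \<ge> 0" and lc: "\<And>j. j \<ge> 1 \<Longrightarrow> (s j)^2 \<le> s (j-1) * s (j+1)"
  shows "1 \<le> p \<Longrightarrow> p \<le> q + 1 \<Longrightarrow> s p * s q \<le> s (p-1) * s (q+1)"
proof (induction q)
  case 0
  then have "p = 1" by auto
  then show ?case by simp
next
  case (Suc q)
  show ?case
  proof (cases "p = Suc q + 1")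
    case True then show ?thesis by simp
  next
    case False
    then have pq: "p \<le> q + 1" using Suc.prems by auto
    have IH: "s p * s q \<le> s (p-1) * s (q+1)" using Suc.IH Suc.prems pq by auto
    have L: "(s (q+1))^2 \<le> s q * s (q+2)" using lc[of "q+1"] by simp
    show ?thesis
    proof (cases "s (q+1) = 0")
      case True then show ?thesis using nn by (simp add: mult_nonneg_nonneg)
    next
      case F1: False
      show ?thesis
      proof (cases "s q = 0")
        case True
        have "s (q+1) * s (q+1) > 0" using F1 nn by (simp add: less_le)
        then show ?thesis using L True by (simp add: power2_eq_square)
      next
        case F2: False
        have pos: "s q * s (q+1) > 0" using F1 F2 nn by (simp add: less_le)
        have "(s p * s (q+1)) * (s q * s (q+1)) = (s p * s q) * (s (q+1))^2" by (simp add: power2_eq_square algebra_simps)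
        also have "\<dots> \<le> (s (p-1) * s (q+1)) * (s q * s (q+2))"
          by (rule mult_mono[OF IH L]) (use nn in auto)
        also have "\<dots> = (s (p-1) * s (q+2)) * (s q * s (q+1))" by (simp add: algebra_simps)
        finally have "s p * s (q+1) \<le> s (p-1) * s (q+2)" using pos
          by (meson mult_le_cancel_right_pos)
        then show ?thesis by (simp add: add.commute)
      qed
    qed
  qed
qed

lemma lc_D1:
  fixes s :: "nat \<Rightarrow> real"
  assumes nn: "\<And>j. s j \<ge> 0" and lc: "\<And>j. j \<ge> 1 \<Longrightarrow> (s j)^2 \<le> s (j-1) * s (j+1)"
  shows "1 \<le> p \<Longrightarrow> 1 \<le> q \<Longrightarrow> s p * s q \<le> s 1 * s (p+q-1)"
proof -
  have main: "\<forall>q. p \<le> q \<longrightarrow> s p * s q \<le> s 1 * s (p+q-1)" if "1 \<le> p" for p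
    using that
  proof (induction p rule: nat_induct_at_least)
    case base then show ?case by simp
  next
    case (Suc p)
    show ?case
    proof (intro allI impI)
      fix q assume "Suc p \<le> q"
      have "s (Suc p) * s q \<le> s p * s (q+1)" using lc_step[OF nn lc, of "Suc p" q] \<open>Suc p \<le> q\<close> by simp
      also have "\<dots> \<le> s 1 * s (p + (q+1) - 1)" using Suc.IH[rule_format, of "q+1"] \<open>Suc p \<le> q\<close> by simp
      finally show "s (Suc p) * s q \<le> s 1 * s (Suc p + q - 1)" by simp
    qed
  qed
  assume "1 \<le> p" "1 \<le> q"
  then show ?thesis
  proof (cases "p \<le> q")
    case True then show ?thesis using main \<open>1 \<le> p\<close> by blast
  next
    case False then show ?thesis using main[of q] \<open>1 \<le> q\<close> by (simp add: mult.commute add.commute)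
  qed
qed

lemma lc_D2:
  fixes s :: "nat \<Rightarrow> real"
  assumes nn: "\<And>j. s j \<ge> 0" and lc: "\<And>j. j \<ge> 1 \<Longrightarrow> (s j)^2 \<le> s (j-1) * s (j+1)"
  assumes k1: "k \<ge> 1"
  shows "(s (k-1))^k \<le> s 0 * (s k)^(k-1)"
proof -
  have False: "k \<noteq> 0" using k1 by simp
  have "\<forall>i. i \<le> k-1 \<longrightarrow> (s (k-1))^(i+1) \<le> s (k-1-i) * (s k)^i"
  proof (intro allI)
    fix i show "i \<le> k-1 \<longrightarrow> (s (k-1))^(i+1) \<le> s (k-1-i) * (s k)^i"
    proof (induction i)
      case 0 then show ?case by simp
    next
      case (Suc i)
      show ?case
      proof
        assume a: "Suc i \<le> k - 1"
        have "(s (k-1))^(Suc i+1) = s (k-1) * (s (k-1))^(i+1)" by simp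
        also have "\<dots> \<le> s (k-1) * (s (k-1-i) * (s k)^i)"
          using Suc a nn by (intro mult_left_mono) auto
        also have "\<dots> = (s (k-1-i) * s (k-1)) * (s k)^i" by simp
        also have "\<dots> \<le> (s (k-1-i-1) * s (k-1+1)) * (s k)^i"
          using lc_step[OF nn lc, of "k-1-i" "k-1"] a nn by (intro mult_right_mono) auto
        also have "\<dots> = s (k-1-Suc i) * (s k)^(Suc i)" using False by simp
        finally show "(s (k-1))^(Suc i+1) \<le> s (k-1-Suc i) * (s k)^(Suc i)" .
      qed
    qed
  qed
  then have "(s (k-1))^((k-1)+1) \<le> s (k-1-(k-1)) * (s k)^(k-1)" by blast
  then show ?thesis using k1 by simp
qed

lemma lc_D3:
  fixes s :: "nat \<Rightarrow> real"
  assumes nn: "\<And>j. s j \<ge> 0" and lc: "\<And>j. j \<ge> 1 \<Longrightarrow> (s j)^2 \<le> s (j-1) * s (j+1)"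
  shows "j \<ge> 1 \<Longrightarrow> (s 1)^j \<le> (s 0)^(j-1) * s j"
proof (induction j rule: nat_induct_at_least)
  case base then show ?case by simp
next
  case (Suc j)
  have "(s 1)^(Suc j) = s 1 * (s 1)^j" by simp
  also have "\<dots> \<le> s 1 * ((s 0)^(j-1) * s j)" using Suc nn by (intro mult_left_mono) auto
  also have "\<dots> = (s 0)^(j-1) * (s 1 * s j)" by simp
  also have "\<dots> \<le> (s 0)^(j-1) * (s 0 * s (j+1))"
    using lc_step[OF nn lc, of 1 j] Suc nn by (intro mult_left_mono) auto
  also have "\<dots> = (s 0)^(Suc j - 1) * s (Suc j)" using Suc by (cases j) auto
  finally show ?case .
qed

context sg begin

lemma W_sq_sum: "u \<in> V \<Longrightarrow> (\<Sum>z\<in>V. (W a u z)^2) = W (2*a) u u"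
proof -
  assume u: "u \<in> V"
  have "W (2*a) u u = W (a+a) u u" by (simp add: mult_2)
  also have "\<dots> = (\<Sum>z\<in>V. W a u z * W a z u)" using W_comp u by blast
  also have "\<dots> = (\<Sum>z\<in>V. (W a u z)^2)" using u by (intro sum.cong) (auto simp: W_sym power2_eq_square)
  finally show ?thesis by simp
qed

lemma CSW: assumes u: "u \<in> V" and v: "v \<in> V"
  shows "(W (a+b) u v)^2 \<le> W (2*a) u u * W (2*b) v v"
proof -
  have "W (a+b) u v = (\<Sum>z\<in>V. W a u z * W b v z)"
    using W_comp v u by (simp add: W_sym)
  then have "(W (a+b) u v)^2 \<le> (\<Sum>z\<in>V. (W a u z)^2) * (\<Sum>z\<in>V. (W b v z)^2)"
    using Cauchy_Schwarz_ineq_sum by metis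
  then show ?thesis using W_sq_sum u v by simp
qed

definition sv :: "'a \<Rightarrow> nat \<Rightarrow> real" where "sv v j = W (2*j) v v"

lemma sv_nn: "sv v j \<ge> 0" by (simp add: sv_def W_nonneg)

lemma sv_lc: assumes v: "v \<in> V" shows "j \<ge> 1 \<Longrightarrow> (sv v j)^2 \<le> sv v (j-1) * sv v (j+1)"
proof -
  assume "j \<ge> 1"
  then have "2*j = (j-1) + (j+1)" by simp
  then show ?thesis using CSW[OF v v, of "j-1" "j+1"] by (simp add: sv_def mult_2)
qed

lemma I2: assumes v: "v \<in> V" and a: "a \<ge> 2" and b: "b \<ge> 2" and ab: "a + b = 2*k"
  shows "W a v v * W b v v \<le> W 2 v v * W (a+b-2) v v"
proof (cases "even a")
  case True
  then obtain p where p: "a = 2*p" by blast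
  then have "even b" using ab by presburger
  then obtain q where q: "b = 2*q" by blast
  have "sv v p * sv v q \<le> sv v 1 * sv v (p+q-1)"
    using lc_D1[of "sv v", OF sv_nn sv_lc[OF v]] p q a b by auto
  moreover have "2*(p+q-1) = a+b-2" using p q a b by simp
  ultimately show ?thesis using p q by (simp add: sv_def)
next
  case False
  then obtain p where p: "a = 2*p+1" by (metis oddE)
  then have "odd b" using ab by presburger
  then obtain q where q: "b = 2*q+1" by (metis oddE)
  have p1: "p \<ge> 1" and q1: "q \<ge> 1" using p q a b by auto
  have A1: "(W a v v)^2 \<le> sv v p * sv v (p+1)" using CSW[OF v v, of p "p+1"] p by (simp add: sv_def mult_2)
  have B1: "(W b v v)^2 \<le> sv v q * sv v (q+1)" using CSW[OF v v, of q "q+1"] q by (simp add: sv_def mult_2)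
  have C1: "sv v p * sv v (q+1) \<le> sv v 1 * sv v (p+q)"
    using lc_D1[of "sv v", OF sv_nn sv_lc[OF v], of p "q+1"] p1 by simp
  have C2: "sv v (p+1) * sv v q \<le> sv v 1 * sv v (p+q)"
    using lc_D1[of "sv v", OF sv_nn sv_lc[OF v], of "p+1" q] q1 by simp
  have "(W a v v * W b v v)^2 = (W a v v)^2 * (W b v v)^2" by (simp add: power_mult_distrib)
  also have "\<dots> \<le> (sv v p * sv v (p+1)) * (sv v q * sv v (q+1))"
    by (rule mult_mono[OF A1 B1]) (auto simp: sv_nn)
  also have "\<dots> = (sv v p * sv v (q+1)) * (sv v (p+1) * sv v q)" by (simp add: algebra_simps)
  also have "\<dots> \<le> (sv v 1 * sv v (p+q)) * (sv v 1 * sv v (p+q))"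
    by (rule mult_mono[OF C1 C2]) (auto simp: sv_nn)
  finally have "(W a v v * W b v v)^2 \<le> (sv v 1 * sv v (p+q))^2" by (simp add: power2_eq_square)
  then have "W a v v * W b v v \<le> sv v 1 * sv v (p+q)"
    using sv_nn by (meson mult_nonneg_nonneg power2_le_imp_le)
  moreover have "2*(p+q) = a+b-2" using p q by simp
  ultimately show ?thesis by (simp add: sv_def)
qed

definition tg :: "nat \<Rightarrow> real" where "tg j = (\<Sum>v\<in>V. W (2*j) v v)"

lemma tg_nn: "tg j \<ge> 0" by (simp add: tg_def W_nonneg sum_nonneg)

lemma tg_lc: "j \<ge> 1 \<Longrightarrow> (tg j)^2 \<le> tg (j-1) * tg (j+1)"
proof -
  assume j: "j \<ge> 1"
  have le: "W (2*j) v v \<le> sqrt (sv v (j-1)) * sqrt (sv v (j+1))" if v: "v \<in> V" for v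
  proof -
    have "(W (2*j) v v)^2 \<le> sv v (j-1) * sv v (j+1)" using sv_lc[OF v j] by (simp add: sv_def)
    then show ?thesis by (metis real_le_rsqrt real_sqrt_mult)
  qed
  have "tg j \<le> (\<Sum>v\<in>V. sqrt (sv v (j-1)) * sqrt (sv v (j+1)))"
    unfolding tg_def by (rule sum_mono) (use le in auto)
  then have "(tg j)^2 \<le> (\<Sum>v\<in>V. sqrt (sv v (j-1)) * sqrt (sv v (j+1)))^2"
    using tg_nn by (simp add: power_mono)
  also have "\<dots> \<le> (\<Sum>v\<in>V. (sqrt (sv v (j-1)))^2) * (\<Sum>v\<in>V. (sqrt (sv v (j+1)))^2)"
    by (rule Cauchy_Schwarz_ineq_sum)
  also have "\<dots> = tg (j-1) * tg (j+1)"
    using j by (simp add: W_nonneg tg_def sv_def)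
  finally show ?thesis .
qed

definition av :: "nat \<Rightarrow> 'a \<Rightarrow> real" where "av p z = (\<Sum>u\<in>V. W p u z)"

lemma gsplit: "(\<Sum>u\<in>V. \<Sum>v\<in>V. W (p+q) u v) = (\<Sum>z\<in>V. av p z * av q z)"
proof -
  have "(\<Sum>u\<in>V. \<Sum>v\<in>V. W (p+q) u v) = (\<Sum>u\<in>V. \<Sum>v\<in>V. \<Sum>z\<in>V. W p u z * W q v z)"
    by (intro sum.cong refl) (simp add: W_comp W_sym)
  also have "\<dots> = (\<Sum>u\<in>V. \<Sum>z\<in>V. \<Sum>v\<in>V. W p u z * W q v z)"
    by (rule sum.cong[OF refl]) (rule sum.swap)
  also have "\<dots> = (\<Sum>z\<in>V. \<Sum>u\<in>V. \<Sum>v\<in>V. W p u z * W q v z)"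
    by (rule sum.swap)
  also have "\<dots> = (\<Sum>z\<in>V. (\<Sum>u\<in>V. W p u z) * (\<Sum>v\<in>V. W q v z))"
    by (simp add: sum_product)
  finally show ?thesis by (simp add: av_def)
qed

definition gg :: "nat \<Rightarrow> real" where "gg j = (\<Sum>u\<in>V. \<Sum>v\<in>V. W (2*j) u v)"

lemma gg_nn: "gg j \<ge> 0" by (simp add: gg_def W_nonneg sum_nonneg)

lemma gg_sq: "gg j = (\<Sum>z\<in>V. (av j z)^2)"
  using gsplit[of j j] by (simp add: gg_def mult_2 power2_eq_square)

lemma gg_lc: "j \<ge> 1 \<Longrightarrow> (gg j)^2 \<le> gg (j-1) * gg (j+1)"
proof -
  assume j: "j \<ge> 1"
  have "gg j = (\<Sum>z\<in>V. av (j-1) z * av (j+1) z)"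
    using gsplit[of "j-1" "j+1"] j by (simp add: gg_def mult_2)
  then have "(gg j)^2 \<le> (\<Sum>z\<in>V. (av (j-1) z)^2) * (\<Sum>z\<in>V. (av (j+1) z)^2)"
    using Cauchy_Schwarz_ineq_sum by metis
  then show ?thesis by (simp add: gg_sq)
qed

lemma tg_ge_gg: "real (card V) * tg k \<ge> gg k"
proof -
  have "gg k = (\<Sum>z\<in>V. (\<Sum>v\<in>V. W k v z * 1)^2)" by (simp add: gg_sq av_def)
  also have "\<dots> \<le> (\<Sum>z\<in>V. (\<Sum>v\<in>V. (W k v z)^2) * (\<Sum>v\<in>V. 1^2))"
    by (rule sum_mono) (rule Cauchy_Schwarz_ineq_sum)
  also have "\<dots> = real (card V) * (\<Sum>z\<in>V. \<Sum>v\<in>V. (W k z v)^2)"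
    by (simp add: sum_distrib_left W_sym mult.commute cong: sum.cong)
  also have "\<dots> = real (card V) * tg k"
    by (simp add: tg_def W_sq_sum)
  finally show ?thesis .
qed

end

lemma card_fibers:
  assumes "finite A" "finite B" "f ` A \<subseteq> B"
  shows "card A = (\<Sum>b\<in>B. card {a\<in>A. f a = b})"
proof -
  have "A = (\<Union>b\<in>B. {a\<in>A. f a = b})" using assms by auto
  then have "card A = card (\<Union>b\<in>B. {a\<in>A. f a = b})" by simp
  also have "\<dots> = (\<Sum>b\<in>B. card {a\<in>A. f a = b})"
    using assms by (intro card_UN_disjoint) auto
  finally show ?thesis .
qed

context sg begin

definition L :: "nat \<Rightarrow> 'a \<Rightarrow> 'a \<Rightarrow> (nat \<Rightarrow> 'a) set" where
  "L m u v = {x \<in> {0..<Suc m} \<rightarrow>\<^sub>E V. x 0 = u \<and> x m = v \<and> (\<forall>i<m. E (x i) (x (Suc i)))}"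

lemma L_fin: "finite (L m u v)"
proof -
  have "L m u v \<subseteq> {0..<Suc m} \<rightarrow>\<^sub>E V" by (auto simp: L_def)
  then show ?thesis using finite_PiE finV by (metis finite_atLeastLessThan finite_subset)
qed

lemma L_split:
  assumes "d \<le> m"
  shows "bij_betw (\<lambda>x. (restrict x {0..<Suc d}, restrict (\<lambda>i. x (i+d)) {0..<Suc (m-d)}))
           {x\<in>L m u v. x d = w} (L d u w \<times> L (m-d) w v)"
proof (rule bij_betw_byWitness[where f' = "\<lambda>(y,z). restrict (\<lambda>i. if i \<le> d then y i else z (i-d)) {0..<Suc m}"])
  show "\<forall>a\<in>{x \<in> L m u v. x d = w}. (case (restrict a {0..<Suc d}, restrict (\<lambda>i. a (i + d)) {0..<Suc (m - d)}) of
          (y, z) \<Rightarrow> restrict (\<lambda>i. if i \<le> d then y i else z (i - d)) {0..<Suc m}) = a"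
  proof
    fix a assume a: "a \<in> {x \<in> L m u v. x d = w}"
    show "(case (restrict a {0..<Suc d}, restrict (\<lambda>i. a (i + d)) {0..<Suc (m - d)}) of
          (y, z) \<Rightarrow> restrict (\<lambda>i. if i \<le> d then y i else z (i - d)) {0..<Suc m}) = a"
    proof (rule ext)
      fix i show "(case (restrict a {0..<Suc d}, restrict (\<lambda>i. a (i + d)) {0..<Suc (m - d)}) of
          (y, z) \<Rightarrow> restrict (\<lambda>i. if i \<le> d then y i else z (i - d)) {0..<Suc m}) i = a i"
        using a assms by (auto simp: L_def PiE_def extensional_def)
    qed
  qed
  show "\<forall>a'\<in>L d u w \<times> L (m - d) w v.
       (restrict ((case a' of (y, z) \<Rightarrow> restrict (\<lambda>i. if i \<le> d then y i else z (i - d)) {0..<Suc m})) {0..<Suc d},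
        restrict (\<lambda>i. (case a' of (y, z) \<Rightarrow> restrict (\<lambda>i. if i \<le> d then y i else z (i - d)) {0..<Suc m}) (i + d)) {0..<Suc (m - d)}) = a'"
  proof
    fix a' assume a': "a' \<in> L d u w \<times> L (m - d) w v"
    then obtain y z where yz: "a' = (y,z)" "y \<in> L d u w" "z \<in> L (m-d) w v" by auto
    have "restrict (restrict (\<lambda>i. if i \<le> d then y i else z (i - d)) {0..<Suc m}) {0..<Suc d} = y"
      using yz assms by (intro ext) (auto simp: L_def PiE_def extensional_def)
    moreover have "restrict (\<lambda>i. restrict (\<lambda>i. if i \<le> d then y i else z (i - d)) {0..<Suc m} (i + d)) {0..<Suc (m - d)} = z"
      using yz assms by (intro ext) (auto simp: L_def PiE_def extensional_def)
    ultimately show "(restrict ((case a' of (y, z) \<Rightarrow> restrict (\<lambda>i. if i \<le> d then y i else z (i - d)) {0..<Suc m})) {0..<Suc d},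
        restrict (\<lambda>i. (case a' of (y, z) \<Rightarrow> restrict (\<lambda>i. if i \<le> d then y i else z (i - d)) {0..<Suc m}) (i + d)) {0..<Suc (m - d)}) = a'"
      using yz by simp
  qed
  show "(\<lambda>x. (restrict x {0..<Suc d}, restrict (\<lambda>i. x (i + d)) {0..<Suc (m - d)})) ` {x \<in> L m u v. x d = w}
    \<subseteq> L d u w \<times> L (m - d) w v"
  proof
    fix p assume "p \<in> (\<lambda>x. (restrict x {0..<Suc d}, restrict (\<lambda>i. x (i + d)) {0..<Suc (m - d)})) ` {x \<in> L m u v. x d = w}"
    then obtain x where x: "x \<in> L m u v" "x d = w" and p: "p = (restrict x {0..<Suc d}, restrict (\<lambda>i. x (i + d)) {0..<Suc (m - d)})" by auto
    have "restrict x {0..<Suc d} \<in> L d u w" using x assms by (auto simp: L_def)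
    moreover have "restrict (\<lambda>i. x (i + d)) {0..<Suc (m - d)} \<in> L (m-d) w v"
    proof -
      have "\<forall>i<m-d. E (x (i+d)) (x (Suc i + d))" using x by (auto simp: L_def)
      then show ?thesis using x assms by (auto simp: L_def)
    qed
    ultimately show "p \<in> L d u w \<times> L (m - d) w v" using p by simp
  qed
  show "(\<lambda>(y, z). restrict (\<lambda>i. if i \<le> d then y i else z (i - d)) {0..<Suc m}) ` (L d u w \<times> L (m - d) w v)
    \<subseteq> {x \<in> L m u v. x d = w}"
  proof
    fix p assume "p \<in> (\<lambda>(y, z). restrict (\<lambda>i. if i \<le> d then y i else z (i - d)) {0..<Suc m}) ` (L d u w \<times> L (m - d) w v)"
    then obtain y z where yz: "y \<in> L d u w" "z \<in> L (m-d) w v" and p: "p = restrict (\<lambda>i. if i \<le> d then y i else z (i - d)) {0..<Suc m}" by auto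
    have step: "E (p i) (p (Suc i))" if i: "i < m" for i
    proof (cases "i < d")
      case True then show ?thesis using yz p i by (auto simp: L_def)
    next
      case False
      then have "i - d < m - d" "Suc i - d = Suc (i - d)" using i by auto
      then show ?thesis using yz p i False by (auto simp: L_def)
    qed
    have "p \<in> {0..<Suc m} \<rightarrow>\<^sub>E V" using yz p by (auto simp: L_def PiE_def Pi_def)
    moreover have "p 0 = u" "p m = v" "p d = w" using yz p assms by (auto simp: L_def)
    ultimately show "p \<in> {x \<in> L m u v. x d = w}" using step by (auto simp: L_def)
  qed
qed

lemma L_split_card: "d \<le> m \<Longrightarrow> card {x\<in>L m u v. x d = w} = card (L d u w) * card (L (m-d) w v)"
  using bij_betw_same_card[OF L_split] by (simp add: card_cartesian_product)

end

context sg begin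

lemma L0: assumes u: "u \<in> V" shows "card (L 0 u v) = (if u = v then 1 else 0)"
proof (cases "u = v")
  case True
  have "L 0 u v = {restrict (\<lambda>_. u) {0..<1}}"
  proof
    show "L 0 u v \<subseteq> {restrict (\<lambda>_. u) {0..<1}}"
    proof
      fix x assume x: "x \<in> L 0 u v"
      have "x = restrict (\<lambda>_. u) {0..<1}"
      proof
        fix i show "x i = restrict (\<lambda>_. u) {0..<1} i" using x by (cases "i = 0") (auto simp: L_def PiE_def extensional_def)
      qed
      then show "x \<in> {restrict (\<lambda>_. u) {0..<1}}" by simp
    qed
    show "{restrict (\<lambda>_. u) {0..<1}} \<subseteq> L 0 u v" using u True by (auto simp: L_def)
  qed
  then show ?thesis using True by simp
next
  case False then have "L 0 u v = {}" by (auto simp: L_def)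
  then show ?thesis using False by simp
qed

lemma L1: assumes w: "w \<in> V" shows "card (L (Suc 0) w v) = (if E w v then 1 else 0)"
proof (cases "E w v")
  case True
  define f :: "nat \<Rightarrow> 'a" where "f = restrict (\<lambda>i. if i = 0 then w else v) {0..<2}"
  have "L (Suc 0) w v = {f}"
  proof
    show "L (Suc 0) w v \<subseteq> {f}"
    proof
      fix x assume x: "x \<in> L (Suc 0) w v"
      have "x = f"
      proof
        fix i show "x i = f i" using x by (cases "i = 0"; cases "i = 1") (auto simp: L_def PiE_def extensional_def f_def)
      qed
      then show "x \<in> {f}" by simp
    qed
    show "{f} \<subseteq> L (Suc 0) w v" using w True EV[OF True] by (auto simp: L_def f_def)
  qed
  then show ?thesis using True by simp
next
  case False then have "L (Suc 0) w v = {}" by (auto simp: L_def)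
  then show ?thesis using False by simp
qed

lemma L_card: assumes u: "u \<in> V" shows "real (card (L m u v)) = W m u v"
proof (induction m arbitrary: v)
  case 0 then show ?case using L0[OF u] by simp
next
  case (Suc m)
  have "card (L (Suc m) u v) = (\<Sum>w\<in>V. card {x\<in>L (Suc m) u v. x m = w})"
    by (rule card_fibers) (use L_fin finV in \<open>auto simp: L_def PiE_def Pi_def\<close>)
  also have "\<dots> = (\<Sum>w\<in>V. card (L m u w) * card (L (Suc 0) w v))"
    by (intro sum.cong refl) (simp add: L_split_card)
  finally have "real (card (L (Suc m) u v)) = (\<Sum>w\<in>V. W m u w * (if E w v then 1 else 0))"
    using Suc.IH by (simp add: L1 of_nat_sum if_distrib cong: if_cong)
  then show ?case by (simp add: wk.simps)
qed

end

context sg begin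

definition Cl :: "nat \<Rightarrow> (nat \<Rightarrow> 'a) set" where
  "Cl m = {y \<in> {0..<Suc m} \<rightarrow>\<^sub>E V. y m = y 0 \<and> (\<forall>i<m. E (y i) (y (Suc i)))}"

lemma H_Cl_bij:
  assumes m: "0 < m"
  shows "bij_betw (\<lambda>x. restrict (\<lambda>i. x (i mod m)) {0..<Suc m}) {x\<in>hom_cycles V E m. Q x} {y\<in>Cl m. Q (restrict y {0..<m})}"
proof (rule bij_betw_byWitness[where f' = "\<lambda>y. restrict y {0..<m}"])
  show "\<forall>a\<in>{x \<in> hom_cycles V E m. Q x}. restrict (restrict (\<lambda>i. a (i mod m)) {0..<Suc m}) {0..<m} = a"
  proof
    fix a assume a: "a \<in> {x \<in> hom_cycles V E m. Q x}"
    show "restrict (restrict (\<lambda>i. a (i mod m)) {0..<Suc m}) {0..<m} = a"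
      using a by (intro ext) (auto simp: hom_cycles_def PiE_def extensional_def)
  qed
  have bk: "restrict (\<lambda>i. restrict y {0..<m} (i mod m)) {0..<Suc m} = y" if y: "y \<in> Cl m" for y
  proof (rule ext)
    fix i show "restrict (\<lambda>i. restrict y {0..<m} (i mod m)) {0..<Suc m} i = y i"
    proof (cases "i < m")
      case True then show ?thesis by simp
    next
      case False
      show ?thesis
      proof (cases "i = m")
        case True then show ?thesis using y m by (simp add: Cl_def)
      next
        case False
        then have "i \<notin> {0..<Suc m}" using \<open>\<not> i < m\<close> by auto
        then show ?thesis using y by (auto simp: Cl_def PiE_def extensional_def)
      qed
    qed
  qed
  then show "\<forall>a'\<in>{y \<in> Cl m. Q (restrict y {0..<m})}. restrict (\<lambda>i. restrict a' {0..<m} (i mod m)) {0..<Suc m} = a'"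
    by blast
  show "(\<lambda>x. restrict (\<lambda>i. x (i mod m)) {0..<Suc m}) ` {x \<in> hom_cycles V E m. Q x} \<subseteq> {y \<in> Cl m. Q (restrict y {0..<m})}"
  proof
    fix p assume "p \<in> (\<lambda>x. restrict (\<lambda>i. x (i mod m)) {0..<Suc m}) ` {x \<in> hom_cycles V E m. Q x}"
    then obtain x where x: "x \<in> hom_cycles V E m" "Q x" and p: "p = restrict (\<lambda>i. x (i mod m)) {0..<Suc m}" by auto
    have rx: "restrict p {0..<m} = x"
      using x p by (intro ext) (auto simp: hom_cycles_def PiE_def extensional_def)
    have "p \<in> {0..<Suc m} \<rightarrow>\<^sub>E V" using x p m by (auto simp: hom_cycles_def PiE_def Pi_def)
    moreover have "p m = p 0" using p m by simp
    moreover have "E (p i) (p (Suc i))" if i: "i < m" for i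
    proof -
      have "E (x i) (x ((i+1) mod m))" using x i by (auto simp: hom_cycles_def)
      moreover have "p i = x i" using p i by simp
      moreover have "p (Suc i) = x ((i+1) mod m)" using p i by simp
      ultimately show ?thesis by simp
    qed
    ultimately show "p \<in> {y \<in> Cl m. Q (restrict y {0..<m})}" using rx x by (auto simp: Cl_def)
  qed
  show "(\<lambda>y. restrict y {0..<m}) ` {y \<in> Cl m. Q (restrict y {0..<m})} \<subseteq> {x \<in> hom_cycles V E m. Q x}"
  proof
    fix p assume "p \<in> (\<lambda>y. restrict y {0..<m}) ` {y \<in> Cl m. Q (restrict y {0..<m})}"
    then obtain y where y: "y \<in> Cl m" "Q (restrict y {0..<m})" and p: "p = restrict y {0..<m}" by auto
    have "E (p i) (p ((i+1) mod m))" if i: "i < m" for i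
    proof (cases "i + 1 < m")
      case True then show ?thesis using y p i by (auto simp: Cl_def)
    next
      case False
      then have "i + 1 = m" using i by simp
      then show ?thesis using y p i m by (auto simp: Cl_def)
    qed
    moreover have "p \<in> {0..<m} \<rightarrow>\<^sub>E V" using y p by (auto simp: Cl_def PiE_def Pi_def)
    ultimately show "p \<in> {x \<in> hom_cycles V E m. Q x}" using y p by (auto simp: hom_cycles_def)
  qed
qed

lemma Cl_fin: "finite (Cl m)"
proof -
  have "Cl m \<subseteq> {0..<Suc m} \<rightarrow>\<^sub>E V" by (auto simp: Cl_def)
  then show ?thesis using finite_PiE finV by (metis finite_atLeastLessThan finite_subset)
qed

lemma Hcount:
  assumes m: "0 < m" and d: "d < m"
  shows "real (card {x\<in>hom_cycles V E m. P (x 0) (x d)}) =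
         (\<Sum>u\<in>V. \<Sum>w\<in>V. if P u w then W d u w * W (m-d) w u else 0)"
proof -
  have "card {x\<in>hom_cycles V E m. P (x 0) (x d)} = card {y\<in>Cl m. P (restrict y {0..<m} 0) (restrict y {0..<m} d)}"
    using bij_betw_same_card[OF H_Cl_bij[OF m, of "\<lambda>x. P (x 0) (x d)"]] by simp
  also have "\<dots> = card {y\<in>Cl m. P (y 0) (y d)}" using m d by simp
  also have "\<dots> = (\<Sum>uw\<in>V\<times>V. card {y\<in>{y\<in>Cl m. P (y 0) (y d)}. (y 0, y d) = uw})"
  proof (rule card_fibers)
    show "finite {y\<in>Cl m. P (y 0) (y d)}" using Cl_fin[of m] by (rule finite_subset[rotated]) auto
  qed (use finV m d in \<open>auto simp: Cl_def PiE_def Pi_def\<close>)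
  also have "\<dots> = (\<Sum>u\<in>V. \<Sum>w\<in>V. card {y\<in>{y\<in>Cl m. P (y 0) (y d)}. (y 0, y d) = (u,w)})"
    by (simp add: sum.cartesian_product split_def prod_eq_iff)
  also have "\<dots> = (\<Sum>u\<in>V. \<Sum>w\<in>V. if P u w then card {x\<in>L m u u. x d = w} else 0)"
  proof (intro sum.cong refl)
    fix u w
    show "card {y\<in>{y\<in>Cl m. P (y 0) (y d)}. (y 0, y d) = (u,w)} = (if P u w then card {x\<in>L m u u. x d = w} else 0)"
    proof (cases "P u w")
      case True
      have "{y\<in>{y\<in>Cl m. P (y 0) (y d)}. (y 0, y d) = (u,w)} = {x\<in>L m u u. x d = w}"
        using True by (auto simp: Cl_def L_def)
      then show ?thesis using True by simp
    next
      case False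
      then have "{y\<in>{y\<in>Cl m. P (y 0) (y d)}. (y 0, y d) = (u,w)} = {}" by auto
      then show ?thesis using False by (simp only:) simp
    qed
  qed
  finally have "real (card {x\<in>hom_cycles V E m. P (x 0) (x d)}) =
      (\<Sum>u\<in>V. \<Sum>w\<in>V. if P u w then real (card {x\<in>L m u u. x d = w}) else 0)"
    by (simp add: of_nat_sum if_distrib cong: if_cong)
  also have "\<dots> = (\<Sum>u\<in>V. \<Sum>w\<in>V. if P u w then W d u w * W (m-d) w u else 0)"
    using d by (intro sum.cong refl) (simp add: L_split_card L_card)
  finally show ?thesis .
qed

end

context sg begin

definition rot :: "nat \<Rightarrow> nat \<Rightarrow> (nat \<Rightarrow> 'a) \<Rightarrow> (nat \<Rightarrow> 'a)" where
  "rot m j x = restrict (\<lambda>t. x ((t + j) mod m)) {0..<m}"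

lemma rot_mem: assumes m: "0 < m" and x: "x \<in> hom_cycles V E m" shows "rot m j x \<in> hom_cycles V E m"
proof -
  have "E (rot m j x t) (rot m j x ((t+1) mod m))" if t: "t < m" for t
  proof -
    have "E (x ((t+j) mod m)) (x (((t+j) mod m + 1) mod m))" using x m by (auto simp: hom_cycles_def)
    moreover have "((t+j) mod m + 1) mod m = ((t+1) mod m + j) mod m"
      by (metis add.commute add.left_commute mod_add_left_eq)
    ultimately show ?thesis using t m by (simp add: rot_def)
  qed
  moreover have "rot m j x \<in> {0..<m} \<rightarrow>\<^sub>E V" using x m by (auto simp: rot_def hom_cycles_def PiE_def Pi_def)
  ultimately show ?thesis by (simp add: hom_cycles_def)
qed

lemma rot_rot: assumes x: "x \<in> hom_cycles V E m" and m: "0 < m" shows "rot m a (rot m b x) = rot m (a+b) x"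
proof (rule ext)
  fix t show "rot m a (rot m b x) t = rot m (a+b) x t"
    using m by (auto simp: rot_def mod_add_left_eq add.assoc)
qed

lemma rot_m: assumes x: "x \<in> hom_cycles V E m" and m: "0 < m" shows "rot m m x = x"
proof (rule ext)
  fix t show "rot m m x t = x t"
    using x m by (auto simp: rot_def hom_cycles_def PiE_def extensional_def)
qed

lemma rot_card:
  assumes m: "0 < m" and i: "i < m" and d: "d < m"
  shows "card {x\<in>hom_cycles V E m. R (x i) (x ((i+d) mod m))} = card {x\<in>hom_cycles V E m. R (x 0) (x d)}"
proof (rule bij_betw_same_card[of "rot m i"], rule bij_betw_byWitness[where f' = "rot m (m-i)"])
  show "\<forall>a\<in>{x \<in> hom_cycles V E m. R (x i) (x ((i + d) mod m))}. rot m (m - i) (rot m i a) = a"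
    using rot_rot rot_m m i by auto
  show "\<forall>a'\<in>{x \<in> hom_cycles V E m. R (x 0) (x d)}. rot m i (rot m (m - i) a') = a'"
    using rot_rot rot_m m i by auto
  show "rot m i ` {x \<in> hom_cycles V E m. R (x i) (x ((i + d) mod m))} \<subseteq> {x \<in> hom_cycles V E m. R (x 0) (x d)}"
  proof
    fix y assume "y \<in> rot m i ` {x \<in> hom_cycles V E m. R (x i) (x ((i + d) mod m))}"
    then obtain x where x: "x \<in> hom_cycles V E m" "R (x i) (x ((i + d) mod m))" and y: "y = rot m i x" by auto
    show "y \<in> {x \<in> hom_cycles V E m. R (x 0) (x d)}"
      using x y rot_mem[OF m x(1), of i] i m d by (simp add: rot_def add.commute)
  qed
  show "rot m (m - i) ` {x \<in> hom_cycles V E m. R (x 0) (x d)} \<subseteq> {x \<in> hom_cycles V E m. R (x i) (x ((i + d) mod m))}"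
  proof
    fix y assume "y \<in> rot m (m - i) ` {x \<in> hom_cycles V E m. R (x 0) (x d)}"
    then obtain x where x: "x \<in> hom_cycles V E m" "R (x 0) (x d)" and y: "y = rot m (m-i) x" by auto
    have "(i + (m - i)) mod m = 0" using i by simp
    moreover have "((i + d) mod m + (m - i)) mod m = d"
    proof -
      have "((i + d) mod m + (m - i)) mod m = (i + d + (m - i)) mod m" by (simp add: mod_add_left_eq)
      also have "i + d + (m - i) = d + m" using i by simp
      finally show ?thesis using d by simp
    qed
    moreover have "y \<in> hom_cycles V E m" using y rot_mem[OF m x(1)] by simp
    ultimately show "y \<in> {x \<in> hom_cycles V E m. R (x i) (x ((i + d) mod m))}"
      using x y i m by (simp add: rot_def)
  qed
qed

end

lemma sum_ind: "finite A \<Longrightarrow> (\<Sum>z\<in>A. if P z then (1::real) else 0) = real (card {z\<in>A. P z})"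
  by (simp add: sum.If_cases Int_def conj_commute)

context sg begin

lemma W2_cd: assumes u: "u \<in> V" and w: "w \<in> V" shows "W 2 u w = real (codegree V E u w)"
proof -
  have "W 2 u w = W (1+1) u w" by (simp only: one_add_one)
  also have "\<dots> = (\<Sum>z\<in>V. W (Suc 0) u z * W (Suc 0) z w)" using W_comp[OF w, of 1 1 u] by simp
  also have "\<dots> = (\<Sum>z\<in>V. if E u z \<and> E w z then 1 else 0)"
    using u by (intro sum.cong refl) (auto simp: W1 Esym simp del: wk.simps)
  also have "\<dots> = real (codegree V E u w)" using finV by (simp add: sum_ind codegree_def)
  finally show ?thesis .
qed

lemma cd_deg: "codegree V E u u = degree V E u" by (simp add: codegree_def degree_def)

lemma av1: assumes z: "z \<in> V" shows "av 1 z = real (degree V E z)"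
proof -
  have "av 1 z = (\<Sum>u\<in>V. if E z u then 1 else 0)"
    unfolding av_def by (intro sum.cong refl) (auto simp: W1 Esym simp del: wk.simps)
  then show ?thesis using finV by (simp add: sum_ind degree_def)
qed

lemma handshake: "(\<Sum>v\<in>V. degree V E v) = 2 * card (edges V E)"
proof -
  define D where "D = {p\<in>V\<times>V. E (fst p) (snd p)}"
  have finD: "finite D" using finV by (simp add: D_def)
  have "(\<Sum>v\<in>V. degree V E v) = card (SIGMA v:V. {u\<in>V. E v u})"
    using finV by (simp add: degree_def)
  also have "(SIGMA v:V. {u\<in>V. E v u}) = D" by (auto simp: D_def)
  also have "card D = (\<Sum>e\<in>edges V E. card {p\<in>D. {fst p, snd p} = e})"
  proof (rule card_fibers)
    have "edges V E \<subseteq> Pow V" by (auto simp: edges_def)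
    then show "finite (edges V E)" using finV by (meson finite_Pow_iff finite_subset)
    show "(\<lambda>p. {fst p, snd p}) ` D \<subseteq> edges V E"
    proof
      fix e assume "e \<in> (\<lambda>p. {fst p, snd p}) ` D"
      then obtain a b where ab: "e = {a,b}" "a \<in> V" "b \<in> V" "E a b" by (auto simp: D_def)
      show "e \<in> edges V E" unfolding edges_def
        by (rule CollectI, rule exI[of _ a], rule exI[of _ b]) (use ab in simp)
    qed
  qed (use finD in auto)
  also have "\<dots> = (\<Sum>e\<in>edges V E. 2)"
  proof (intro sum.cong refl)
    fix e assume "e \<in> edges V E"
    then obtain a b where ab: "e = {a,b}" "a \<in> V" "b \<in> V" "E a b" by (auto simp: edges_def)
    have "a \<noteq> b" using ab Eirr by auto
    have "{p\<in>D. {fst p, snd p} = e} = {(a,b),(b,a)}"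
    proof
      show "{p\<in>D. {fst p, snd p} = e} \<subseteq> {(a,b),(b,a)}"
      proof
        fix p assume "p \<in> {p\<in>D. {fst p, snd p} = e}"
        then have "{fst p, snd p} = {a,b}" using ab by simp
        then have "(fst p = a \<and> snd p = b) \<or> (fst p = b \<and> snd p = a)" by (simp add: doubleton_eq_iff)
        then show "p \<in> {(a,b),(b,a)}" by (cases p) auto
      qed
      show "{(a,b),(b,a)} \<subseteq> {p\<in>D. {fst p, snd p} = e}"
        using ab Esym[OF ab(4)] by (auto simp: D_def)
    qed
    then show "card {p\<in>D. {fst p, snd p} = e} = 2" using \<open>a \<noteq> b\<close> by simp
  qed
  finally show ?thesis by simp
qed

end

context sg begin

lemma C4_fin: "finite (C4_copies V E)"
proof -
  have "C4_copies V E \<subseteq> Pow (Pow V)" by (auto simp: C4_copies_def)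
  then show ?thesis using finV by (meson finite_Pow_iff finite_subset)
qed

lemma pairs_card: assumes "finite A" shows "card {(x,y). x \<in> A \<and> y \<in> A \<and> x \<noteq> y} = card A * (card A - 1)"
proof -
  have "{(x,y). x \<in> A \<and> y \<in> A \<and> x \<noteq> y} = (SIGMA x:A. A - {x})" by auto
  then have "card {(x,y). x \<in> A \<and> y \<in> A \<and> x \<noteq> y} = (\<Sum>x\<in>A. card (A - {x}))" using assms by simp
  also have "\<dots> = (\<Sum>x\<in>A. card A - 1)" using assms by (intro sum.cong refl) simp
  finally show ?thesis by simp
qed

lemma C4_bound:
  assumes u: "u \<in> V"
  shows "(\<Sum>w\<in>V-{u}. codegree V E u w * (codegree V E u w - 1)) \<le>
         (\<Sum>x\<in>V. if E u x then card {C\<in>C4_copies V E. {u,x} \<in> C} else 0)"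
proof -
  define Nb where "Nb w = {z\<in>V. E u z \<and> E w z}" for w
  define Pr where "Pr w = {(x,y). x \<in> Nb w \<and> y \<in> Nb w \<and> x \<noteq> y}" for w
  define T where "T = (SIGMA w:V-{u}. Pr w)"
  have finNb: "finite (Nb w)" for w using finV by (simp add: Nb_def)
  have finPr: "finite (Pr w)" for w
  proof -
    have "Pr w \<subseteq> Nb w \<times> Nb w" by (auto simp: Pr_def)
    then show ?thesis using finNb by (meson finite_SigmaI finite_subset)
  qed
  have finT: "finite T" using finV finPr by (simp add: T_def)
  have "(\<Sum>w\<in>V-{u}. codegree V E u w * (codegree V E u w - 1)) = (\<Sum>w\<in>V-{u}. card (Pr w))"
  proof (intro sum.cong refl)
    fix w
    have "card (Pr w) = card (Nb w) * (card (Nb w) - 1)" unfolding Pr_def by (rule pairs_card[OF finNb])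
    moreover have "codegree V E u w = card (Nb w)" by (simp add: codegree_def Nb_def)
    ultimately show "codegree V E u w * (codegree V E u w - 1) = card (Pr w)" by simp
  qed
  also have "\<dots> = card T" using finV finPr by (simp add: T_def)
  also have "\<dots> = (\<Sum>x\<in>V. card {t\<in>T. fst (snd t) = x})"
    by (rule card_fibers) (use finT finV in \<open>auto simp: T_def Pr_def Nb_def\<close>)
  also have "\<dots> \<le> (\<Sum>x\<in>V. if E u x then card {C\<in>C4_copies V E. {u,x} \<in> C} else 0)"
  proof (rule sum_mono)
    fix x assume xV: "x \<in> V"
    show "card {t\<in>T. fst (snd t) = x} \<le> (if E u x then card {C\<in>C4_copies V E. {u,x} \<in> C} else 0)"
    proof (cases "E u x")
      case False
      then have "{t\<in>T. fst (snd t) = x} = {}" by (auto simp: T_def Pr_def Nb_def)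
      then show ?thesis using False by (simp only:) simp
    next
      case True
      define g where "g t = {{u,x},{x,fst t},{fst t, snd (snd t)},{snd (snd t), u}}" for t :: "'a \<times> 'a \<times> 'a"
      have facts: "w \<in> V \<and> w \<noteq> u \<and> y \<in> V \<and> y \<noteq> x \<and> E u x \<and> E w x \<and> E u y \<and> E w y"
        if "(w,x',y) \<in> T" "x' = x" for w x' y
        using that True by (auto simp: T_def Pr_def Nb_def)
      have "inj_on g {t\<in>T. fst (snd t) = x}"
      proof (rule inj_onI)
        fix t t' assume t: "t \<in> {t\<in>T. fst (snd t) = x}" and t': "t' \<in> {t\<in>T. fst (snd t) = x}" and eq: "g t = g t'"
        obtain w y where tw: "t = (w,x,y)" using t by (cases t) auto
        obtain w' y' where tw': "t' = (w',x,y')" using t' by (cases t') auto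
        have f1: "w \<in> V \<and> w \<noteq> u \<and> y \<in> V \<and> y \<noteq> x \<and> E u x \<and> E w x \<and> E u y \<and> E w y"
          using facts t tw by auto
        have f2: "w' \<in> V \<and> w' \<noteq> u \<and> y' \<in> V \<and> y' \<noteq> x \<and> E u x \<and> E w' x \<and> E u y' \<and> E w' y'"
          using facts t' tw' by auto
        have ne: "u \<noteq> x" "x \<noteq> w" "x \<noteq> w'" "u \<noteq> y" "u \<noteq> y'" "w \<noteq> y" "w' \<noteq> y'"
          using f1 f2 Eirr by metis+
        have "{x,w} \<in> g t" using tw by (simp add: g_def)
        then have "{x,w} \<in> g t'" using eq by simp
        then have ww: "w = w'" using tw' f1 f2 ne by (auto simp: g_def doubleton_eq_iff)
        have "{y,u} \<in> g t" using tw by (simp add: g_def)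
        then have "{y,u} \<in> g t'" using eq by simp
        then have yy: "y = y'" using tw' f1 f2 ne ww by (auto simp: g_def doubleton_eq_iff)
        show "t = t'" using tw tw' ww yy by simp
      qed
      moreover have "g ` {t\<in>T. fst (snd t) = x} \<subseteq> {C\<in>C4_copies V E. {u,x} \<in> C}"
      proof
        fix C assume "C \<in> g ` {t\<in>T. fst (snd t) = x}"
        then obtain w y where wy: "(w,x,y) \<in> T" and C: "C = g (w,x,y)" by auto
        have f1: "w \<in> V \<and> w \<noteq> u \<and> y \<in> V \<and> y \<noteq> x \<and> E u x \<and> E w x \<and> E u y \<and> E w y"
          using facts wy by auto
        have ne: "u \<noteq> x" "x \<noteq> w" "u \<noteq> y" "w \<noteq> y"
          using f1 Eirr by metis+
        have exw: "E x w" "E y u" "u \<noteq> w" "x \<noteq> y" using f1 Esym by auto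
        have "C \<in> C4_copies V E"
          unfolding C4_copies_def C g_def
          by (rule CollectI, rule exI[of _ u], rule exI[of _ x], rule exI[of _ w], rule exI[of _ y])
             (use f1 ne u xV exw in simp)
        then show "C \<in> {C\<in>C4_copies V E. {u,x} \<in> C}" using C by (simp add: g_def)
      qed
      ultimately have "card {t\<in>T. fst (snd t) = x} \<le> card {C\<in>C4_copies V E. {u,x} \<in> C}"
        using C4_fin by (intro card_inj_on_le) auto
      then show ?thesis using True by simp
    qed
  qed
  finally show ?thesis .
qed

end

context sg begin

lemma cardH: assumes k: "k \<ge> 1" shows "real (card (hom_cycles V E (2*k))) = tg k"
proof -
  have "hom_cycles V E (2*k) = {x\<in>hom_cycles V E (2*k). (\<lambda>_ _. True) (x 0) (x 0)}" by simp
  then have "real (card (hom_cycles V E (2*k))) = (\<Sum>u\<in>V. \<Sum>w\<in>V. W 0 u w * W (2*k - 0) w u)"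
    using Hcount[of "2*k" 0 "\<lambda>_ _. True"] k by simp
  also have "\<dots> = (\<Sum>u\<in>V. W (2*k) u u)"
  proof (rule sum.cong[OF refl])
    fix u assume u: "u \<in> V"
    have "(\<Sum>w\<in>V. W 0 u w * W (2*k - 0) w u) = (\<Sum>w\<in>V. if w = u then W (2*k) u u else 0)"
      by (rule sum.cong[OF refl]) auto
    then show "(\<Sum>w\<in>V. W 0 u w * W (2*k - 0) w u) = W (2*k) u u" using finV u by simp
  qed
  finally show ?thesis by (simp add: tg_def)
qed

lemma amgm: fixes a b c :: real assumes "a \<ge> 0" "b \<ge> 0" "c \<ge> 0" "a^2 \<le> b * c" shows "a \<le> (b + c) / 2"
proof -
  have e: "((b + c)/2)^2 - b * c = ((b - c)/2)^2" by (simp add: power2_eq_square field_simps)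
  have "b * c \<le> ((b + c)/2)^2" using e zero_le_power2[of "(b - c)/2"] by linarith
  then have "a^2 \<le> ((b+c)/2)^2" using assms by linarith
  then show ?thesis using assms by (meson power2_le_imp_le add_nonneg_nonneg divide_nonneg_pos zero_less_numeral)
qed

lemma bad1_bound:
  assumes k: "k \<ge> 2" and d1: "2 \<le> d" and d2: "d \<le> 2*k - 2" and i: "i < 2*k"
    and Dl: "\<And>v. v \<in> V \<Longrightarrow> real (degree V E v) \<le> \<Delta>"
  shows "real (card {x\<in>hom_cycles V E (2*k). x i = x ((i+d) mod (2*k))}) \<le> \<Delta> * tg (k-1)"
proof -
  have "card {x\<in>hom_cycles V E (2*k). x i = x ((i+d) mod (2*k))} = card {x\<in>hom_cycles V E (2*k). x 0 = x d}"
    using rot_card[of "2*k" i d "(=)"] k d2 i by simp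
  then have "real (card {x\<in>hom_cycles V E (2*k). x i = x ((i+d) mod (2*k))}) =
      (\<Sum>u\<in>V. \<Sum>w\<in>V. if u = w then W d u w * W (2*k-d) w u else 0)"
    using Hcount[of "2*k" d "(=)"] k d2 by simp
  also have "\<dots> = (\<Sum>u\<in>V. W d u u * W (2*k-d) u u)"
    using finV by (intro sum.cong refl) simp
  also have "\<dots> \<le> (\<Sum>u\<in>V. W 2 u u * W (d + (2*k-d) - 2) u u)"
    using I2[of _ d "2*k-d" k] d1 d2 k by (intro sum_mono) auto
  also have "\<dots> \<le> (\<Sum>u\<in>V. \<Delta> * W (2*(k-1)) u u)"
  proof (rule sum_mono)
    fix u assume u: "u \<in> V"
    have "d + (2*k-d) - 2 = 2*(k-1)" using d2 k by simp
    moreover have "W 2 u u \<le> \<Delta>" using W2_cd[OF u u] cd_deg Dl[OF u] by simp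
    ultimately show "W 2 u u * W (d + (2*k-d) - 2) u u \<le> \<Delta> * W (2*(k-1)) u u"
      by (simp add: W_nonneg mult_right_mono)
  qed
  also have "\<dots> = \<Delta> * tg (k-1)" by (simp add: tg_def sum_distrib_left)
  finally show ?thesis .
qed

end

context sg begin

lemma cd_sym: "codegree V E u w = codegree V E w u" by (simp add: codegree_def conj_commute)

lemma h_bound:
  assumes u: "u \<in> V" and tau: "\<tau> > 1" and M0: "M \<ge> 0"
    and Dl: "real (degree V E u) \<le> \<Delta>"
    and Ml: "\<And>e. e \<in> edges V E \<Longrightarrow> real (card {C\<in>C4_copies V E. e \<in> C}) \<le> M"
  shows "(\<Sum>w\<in>V. if u \<noteq> w \<and> real (codegree V E u w) > \<tau> then real (codegree V E u w) else 0) \<le> \<Delta> * M / (\<tau> - 1)"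
proof -
  let ?c = "\<lambda>w. codegree V E u w"
  have "(\<Sum>w\<in>V. if u \<noteq> w \<and> real (?c w) > \<tau> then real (?c w) else 0)
      = (\<Sum>w\<in>V-{u}. if real (?c w) > \<tau> then real (?c w) else 0)"
    using finV u by (intro sum.mono_neutral_cong_right) auto
  also have "\<dots> \<le> (\<Sum>w\<in>V-{u}. real (?c w * (?c w - 1)) / (\<tau> - 1))"
  proof (rule sum_mono)
    fix w
    show "(if real (?c w) > \<tau> then real (?c w) else 0) \<le> real (?c w * (?c w - 1)) / (\<tau> - 1)"
    proof (cases "real (?c w) > \<tau>")
      case True
      then have c1: "?c w \<ge> 1" using tau by linarith
      then have "real (?c w * (?c w - 1)) = real (?c w) * (real (?c w) - 1)" by (simp add: of_nat_diff)
      moreover have "real (?c w) * (\<tau> - 1) \<le> real (?c w) * (real (?c w) - 1)"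
        using True by (intro mult_left_mono) auto
      ultimately show ?thesis using True tau by (simp add: field_simps)
    qed (use tau in simp)
  qed
  also have "\<dots> = real (\<Sum>w\<in>V-{u}. ?c w * (?c w - 1)) / (\<tau> - 1)"
    by (simp add: sum_divide_distrib)
  also have "\<dots> \<le> real (\<Sum>x\<in>V. if E u x then card {C\<in>C4_copies V E. {u,x} \<in> C} else 0) / (\<tau> - 1)"
  proof (rule divide_right_mono)
    show "real (\<Sum>w\<in>V-{u}. ?c w * (?c w - 1)) \<le> real (\<Sum>x\<in>V. if E u x then card {C\<in>C4_copies V E. {u,x} \<in> C} else 0)"
      using C4_bound[OF u] by (rule of_nat_mono)
  qed (use tau in simp)
  also have "\<dots> \<le> (\<Sum>x\<in>V. if E u x then M else 0) / (\<tau> - 1)"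
  proof (intro divide_right_mono)
    show "real (\<Sum>x\<in>V. if E u x then card {C\<in>C4_copies V E. {u,x} \<in> C} else 0) \<le> (\<Sum>x\<in>V. if E u x then M else 0)"
      unfolding of_nat_sum
    proof (rule sum_mono)
      fix x assume x: "x \<in> V"
      show "real (if E u x then card {C\<in>C4_copies V E. {u,x} \<in> C} else 0) \<le> (if E u x then M else 0)"
        using Ml[of "{u,x}"] u x by (auto simp: edges_def)
    qed
  qed (use tau in simp)
  also have "(\<Sum>x\<in>V. if E u x then M else 0) = real (degree V E u) * M"
    using finV by (simp add: sum.If_cases degree_def Int_def)
  also have "real (degree V E u) * M / (\<tau> - 1) \<le> \<Delta> * M / (\<tau> - 1)"
    using Dl M0 tau by (intro divide_right_mono mult_right_mono) auto
  finally show ?thesis .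
qed

lemma bad2_bound:
  assumes k: "k \<ge> 2" and i: "i < 2*k" and tau: "\<tau> > 1" and M0: "M \<ge> 0"
    and Dl: "\<And>v. v \<in> V \<Longrightarrow> real (degree V E v) \<le> \<Delta>"
    and Ml: "\<And>e. e \<in> edges V E \<Longrightarrow> real (card {C\<in>C4_copies V E. e \<in> C}) \<le> M"
  shows "real (card {x\<in>hom_cycles V E (2*k). x i \<noteq> x ((i+2) mod (2*k)) \<and> real (codegree V E (x i) (x ((i+2) mod (2*k)))) > \<tau>})
         \<le> \<Delta> * M / (\<tau> - 1) * tg (k-1)"
proof -
  define R where "R u w = (u \<noteq> w \<and> real (codegree V E u w) > \<tau>)" for u w
  define f where "f u w = (if R u w then real (codegree V E u w) else 0)" for u w
  define s where "s u = W (2*(k-1)) u u" for u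
  have fsym: "f u w = f w u" for u w by (auto simp: f_def R_def cd_sym)
  have fnn: "f u w \<ge> 0" for u w by (simp add: f_def)
  have "card {x\<in>hom_cycles V E (2*k). x i \<noteq> x ((i+2) mod (2*k)) \<and> real (codegree V E (x i) (x ((i+2) mod (2*k)))) > \<tau>}
      = card {x\<in>hom_cycles V E (2*k). R (x 0) (x 2)}"
    using rot_card[of "2*k" i 2 R] k i by (simp add: R_def)
  then have "real (card {x\<in>hom_cycles V E (2*k). x i \<noteq> x ((i+2) mod (2*k)) \<and> real (codegree V E (x i) (x ((i+2) mod (2*k)))) > \<tau>})
      = (\<Sum>u\<in>V. \<Sum>w\<in>V. if R u w then W 2 u w * W (2*k-2) w u else 0)"
    using Hcount[of "2*k" 2 R] k by simp
  also have "\<dots> \<le> (\<Sum>u\<in>V. \<Sum>w\<in>V. f u w * ((s w + s u) / 2))"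
  proof (intro sum_mono)
    fix u w assume u: "u \<in> V" and w: "w \<in> V"
    have "W (2*k-2) w u \<le> (s w + s u) / 2"
    proof (rule amgm)
      have "2*k-2 = (k-1)+(k-1)" using k by simp
      then show "(W (2*k-2) w u)^2 \<le> s w * s u" using CSW[OF w u, of "k-1" "k-1"] by (simp add: s_def)
    qed (auto simp: s_def W_nonneg)
    then have "real (codegree V E u w) * W (2*k-2) w u \<le> real (codegree V E u w) * ((s w + s u) / 2)"
      by (rule mult_left_mono) simp
    then show "(if R u w then W 2 u w * W (2*k-2) w u else 0) \<le> f u w * ((s w + s u) / 2)"
      using W2_cd[OF u w] by (auto simp: f_def)
  qed
  also have "\<dots> = (\<Sum>u\<in>V. \<Sum>w\<in>V. f u w * s w) / 2 + (\<Sum>u\<in>V. \<Sum>w\<in>V. f u w * s u) / 2"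
    by (simp add: sum_divide_distrib sum.distrib algebra_simps add_divide_distrib)
  also have "(\<Sum>u\<in>V. \<Sum>w\<in>V. f u w * s w) = (\<Sum>u\<in>V. \<Sum>w\<in>V. f u w * s u)"
  proof -
    have "(\<Sum>u\<in>V. \<Sum>w\<in>V. f u w * s w) = (\<Sum>w\<in>V. \<Sum>u\<in>V. f u w * s w)" by (rule sum.swap)
    also have "\<dots> = (\<Sum>w\<in>V. \<Sum>u\<in>V. f w u * s w)" by (simp add: fsym)
    finally show ?thesis .
  qed
  also have "(\<Sum>u\<in>V. \<Sum>w\<in>V. f u w * s u) / 2 + (\<Sum>u\<in>V. \<Sum>w\<in>V. f u w * s u) / 2 = (\<Sum>u\<in>V. s u * (\<Sum>w\<in>V. f u w))"
    by (simp add: sum_distrib_left mult.commute)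
  also have "\<dots> \<le> (\<Sum>u\<in>V. s u * (\<Delta> * M / (\<tau> - 1)))"
  proof (rule sum_mono)
    fix u assume u: "u \<in> V"
    have "(\<Sum>w\<in>V. f u w) \<le> \<Delta> * M / (\<tau> - 1)"
      using h_bound[OF u tau M0 Dl[OF u] Ml] by (simp add: f_def R_def)
    then show "s u * (\<Sum>w\<in>V. f u w) \<le> s u * (\<Delta> * M / (\<tau> - 1))"
      by (intro mult_left_mono) (auto simp: s_def W_nonneg)
  qed
  also have "\<dots> = \<Delta> * M / (\<tau> - 1) * tg (k-1)"
    by (simp add: tg_def s_def sum_distrib_left sum_divide_distrib mult.commute)
  finally show ?thesis .
qed

end

context sg begin

lemma tg_lower:
  assumes k: "k \<ge> 1" and n: "card V = n" "n > 0" and A: "real (card (edges V E)) \<ge> A" "A \<ge> 0"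
  shows "tg k \<ge> ((2*A/n)^2)^k"
proof -
  have "(\<Sum>v\<in>V. real (degree V E v)) = real (\<Sum>v\<in>V. degree V E v)" by (simp add: of_nat_sum)
  also have "\<dots> = 2 * real (card (edges V E))" by (simp add: handshake)
  finally have sd: "(\<Sum>v\<in>V. real (degree V E v)) \<ge> 2*A" using A by linarith
  have gg0: "gg 0 = n" using finV n by (simp add: gg_def)
  have "(\<Sum>v\<in>V. real (degree V E v) * 1)^2 \<le> (\<Sum>v\<in>V. (real (degree V E v))^2) * (\<Sum>v\<in>V. 1^2)"
    by (rule Cauchy_Schwarz_ineq_sum)
  moreover have "gg 1 = (\<Sum>v\<in>V. (real (degree V E v))^2)"
    unfolding gg_sq[of 1] by (rule sum.cong[OF refl]) (metis av1)
  ultimately have "(\<Sum>v\<in>V. real (degree V E v))^2 \<le> gg 1 * n"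
    using n by simp
  moreover have "(2*A)^2 \<le> (\<Sum>v\<in>V. real (degree V E v))^2" using sd A by (intro power_mono) auto
  ultimately have g1: "(2*A)^2 / n \<le> gg 1" using n by (simp add: field_simps)
  have "((2*A)^2 / n)^k \<le> (gg 1)^k" using g1 A by (intro power_mono) auto
  also have "\<dots> \<le> (gg 0)^(k-1) * gg k" using lc_D3[of gg, OF gg_nn gg_lc k] .
  also have "\<dots> \<le> real n^(k-1) * (n * tg k)" unfolding gg0 using tg_ge_gg[of k] n by (intro mult_left_mono) auto
  also have "real n^(k-1) * (n * tg k) = real n^k * tg k"
    using k by (cases k) auto
  finally have "((2*A)^2 / n)^k \<le> real n^k * tg k" .
  then have "((2*A)^2 / n)^k / real n^k \<le> tg k" using n by (simp add: field_simps)
  moreover have "((2*A)^2 / n)^k / real n^k = ((2*A/n)^2)^k"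
    using n by (simp add: power_divide power2_eq_square field_simps power_mult_distrib)
  ultimately show ?thesis by simp
qed

lemma tg0: "tg 0 = card V" by (simp add: tg_def)

lemma covering:
  assumes k: "k \<ge> 2" and x: "x \<in> hom_cycles V E (2*k)"
    and notG: "\<not> (inj_on x {0..<2*k} \<and> (\<forall>i<2*k. real (codegree V E (x i) (x ((i + 2) mod (2*k)))) \<le> \<tau>))"
  shows "x \<in> (\<Union>i\<in>{..<2*k}. \<Union>d\<in>{2..2*k-2}. {x\<in>hom_cycles V E (2*k). x i = x ((i+d) mod (2*k))})
           \<union> (\<Union>i\<in>{..<2*k}. {x\<in>hom_cycles V E (2*k). x i \<noteq> x ((i+2) mod (2*k)) \<and> real (codegree V E (x i) (x ((i+2) mod (2*k)))) > \<tau>})"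
proof (cases "inj_on x {0..<2*k}")
  case False
  then obtain a b where ab: "a \<in> {0..<2*k}" "b \<in> {0..<2*k}" "a \<noteq> b" "x a = x b"
    unfolding inj_on_def by blast
  obtain a' b' where ab': "a' < b'" "b' < 2*k" "x a' = x b'"
    using ab by (metis atLeastLessThan_iff linorder_neqE_nat)
  define d where "d = b' - a'"
  have adj: "E (x j) (x ((j+1) mod (2*k)))" if "j < 2*k" for j using x that by (auto simp: hom_cycles_def)
  have "d \<noteq> 1"
  proof
    assume "d = 1"
    then have "(a'+1) mod (2*k) = b'" using ab' by (simp add: d_def)
    then show False using adj[of a'] ab' Eirr by auto
  qed
  moreover have "d \<noteq> 2*k-1"
  proof
    assume "d = 2*k - 1"
    then have "a' = 0" "b' = 2*k-1" using ab' by (auto simp: d_def)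
    moreover have "(2*k - 1 + 1) mod (2*k) = 0" using k by simp
    ultimately show False using adj[of "2*k-1"] ab' Eirr k by auto
  qed
  moreover have "d \<ge> 1" "d \<le> 2*k-1" using ab' by (auto simp: d_def)
  ultimately have d: "2 \<le> d" "d \<le> 2*k-2" by auto
  have "(a' + d) mod (2*k) = b'" using ab' by (simp add: d_def)
  then have "x \<in> {x\<in>hom_cycles V E (2*k). x a' = x ((a'+d) mod (2*k))}" using x ab' by simp
  then show ?thesis using d ab' by auto
next
  case True
  then obtain i where i: "i < 2*k" "real (codegree V E (x i) (x ((i + 2) mod (2*k)))) > \<tau>"
    using notG by (auto simp: not_le)
  have "(i+2) mod (2*k) \<noteq> i"
  proof
    assume "(i+2) mod (2*k) = i"
    show False
    proof (cases "i + 2 < 2*k")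
      case True then show False using \<open>(i+2) mod (2*k) = i\<close> by simp
    next
      case False
      then have "(i+2) mod (2*k) = i + 2 - 2*k" using i k by (simp add: mod_if le_mod_geq)
      then show False using \<open>(i+2) mod (2*k) = i\<close> i k False by linarith
    qed
  qed
  moreover have "(i+2) mod (2*k) < 2*k" using k by simp
  ultimately have "x i \<noteq> x ((i+2) mod (2*k))" using True i by (metis atLeastLessThan_iff inj_onD zero_le)
  then show ?thesis using i x by auto
qed

end

context sg begin

lemma H_fin: "finite (hom_cycles V E m)"
proof -
  have "hom_cycles V E m \<subseteq> {0..<m} \<rightarrow>\<^sub>E V" by (auto simp: hom_cycles_def)
  then show ?thesis using finite_PiE finV by (metis finite_atLeastLessThan finite_subset)
qed

lemma main_ineq:
  assumes k: "k \<ge> 2" and tau: "\<tau> > 1" and M0: "M \<ge> 0" and D0: "\<Delta> \<ge> 0"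
    and Dl: "\<And>v. v \<in> V \<Longrightarrow> real (degree V E v) \<le> \<Delta>"
    and Ml: "\<And>e. e \<in> edges V E \<Longrightarrow> real (card {C\<in>C4_copies V E. e \<in> C}) \<le> M"
  shows "tg k - (4*real k^2*\<Delta> + 2*real k*(\<Delta>*M/(\<tau>-1))) * tg (k-1) \<le>
     real (card {x\<in>hom_cycles V E (2*k). inj_on x {0..<2*k} \<and> (\<forall>i<2*k. real (codegree V E (x i) (x ((i + 2) mod (2*k)))) \<le> \<tau>)})"
proof -
  let ?H = "hom_cycles V E (2*k)"
  let ?G = "{x\<in>?H. inj_on x {0..<2*k} \<and> (\<forall>i<2*k. real (codegree V E (x i) (x ((i + 2) mod (2*k)))) \<le> \<tau>)}"
  let ?B1 = "\<Union>i\<in>{..<2*k}. \<Union>d\<in>{2..2*k-2}. {x\<in>?H. x i = x ((i+d) mod (2*k))}"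
  let ?B2 = "\<Union>i\<in>{..<2*k}. {x\<in>?H. x i \<noteq> x ((i+2) mod (2*k)) \<and> real (codegree V E (x i) (x ((i+2) mod (2*k)))) > \<tau>}"
  have sub: "?H \<subseteq> ?G \<union> ?B1 \<union> ?B2"
  proof
    fix x assume x: "x \<in> ?H"
    show "x \<in> ?G \<union> ?B1 \<union> ?B2"
    proof (cases "inj_on x {0..<2*k} \<and> (\<forall>i<2*k. real (codegree V E (x i) (x ((i + 2) mod (2*k)))) \<le> \<tau>)")
      case True then show ?thesis using x by blast
    next
      case False then show ?thesis using covering[OF k x False] by blast
    qed
  qed
  have finU: "finite (?G \<union> ?B1 \<union> ?B2)" using H_fin by (rule finite_subset[rotated]) auto
  have "card ?H \<le> card (?G \<union> ?B1 \<union> ?B2)" using sub finU by (rule card_mono[rotated])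
  also have "\<dots> \<le> card ?G + card ?B1 + card ?B2" by (meson add_le_mono card_Un_le le_trans order_refl)
  finally have c1: "real (card ?H) \<le> real (card ?G) + real (card ?B1) + real (card ?B2)" by linarith
  have S0: "tg (k-1) \<ge> 0" by (rule tg_nn)
  have "real (card ?B1) \<le> real (\<Sum>i\<in>{..<2*k}. card (\<Union>d\<in>{2..2*k-2}. {x\<in>?H. x i = x ((i+d) mod (2*k))}))"
    by (rule of_nat_mono, rule card_UN_le) simp
  also have "\<dots> \<le> real (\<Sum>i\<in>{..<2*k}. \<Sum>d\<in>{2..2*k-2}. card {x\<in>?H. x i = x ((i+d) mod (2*k))})"
    by (rule of_nat_mono, rule sum_mono, rule card_UN_le) simp
  also have "\<dots> = (\<Sum>i\<in>{..<2*k}. \<Sum>d\<in>{2..2*k-2}. real (card {x\<in>?H. x i = x ((i+d) mod (2*k))}))"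
    by simp
  also have "\<dots> \<le> (\<Sum>i\<in>{..<2*k}. \<Sum>d\<in>{2..2*k-2}. \<Delta> * tg (k-1))"
    using bad1_bound[OF k _ _ _ Dl] by (intro sum_mono) auto
  also have "\<dots> = real (2*k) * real (card {2..2*k-2}) * (\<Delta> * tg (k-1))" by simp
  also have "\<dots> \<le> real (2*k) * real (2*k) * (\<Delta> * tg (k-1))"
    using D0 S0 by (intro mult_right_mono mult_left_mono) auto
  finally have b1: "real (card ?B1) \<le> 4*real k^2*\<Delta> * tg (k-1)" by (simp add: power2_eq_square)
  have "real (card ?B2) \<le> real (\<Sum>i\<in>{..<2*k}. card {x\<in>?H. x i \<noteq> x ((i+2) mod (2*k)) \<and> real (codegree V E (x i) (x ((i+2) mod (2*k)))) > \<tau>})"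
    by (rule of_nat_mono, rule card_UN_le) simp
  also have "\<dots> \<le> (\<Sum>i\<in>{..<2*k}. \<Delta> * M / (\<tau> - 1) * tg (k-1))"
    unfolding of_nat_sum using bad2_bound[OF k _ tau M0 Dl Ml] by (intro sum_mono) auto
  also have "\<dots> = 2*real k*(\<Delta>*M/(\<tau>-1)) * tg (k-1)" by simp
  finally have b2: "real (card ?B2) \<le> 2*real k*(\<Delta>*M/(\<tau>-1)) * tg (k-1)" .
  have "real (card ?H) = tg k" using cardH k by simp
  then show ?thesis using c1 b1 b2 by (simp add: algebra_simps)
qed

end

theorem lemma2p17:
  fixes \<epsilon> K :: real
  assumes "\<epsilon> > 0" and "K > 0"
  shows "\<forall>k::nat. real k \<ge> 2 / \<epsilon> \<longrightarrow>
    (\<exists>N::nat. \<forall>n \<ge> N. \<forall>(V :: nat set) E.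
       simple_graph V E \<and> card V = n
       \<and> real (card (edges V E)) \<ge> (1/6) * real n powr (4/3 + \<epsilon>)
       \<and> (\<forall>v\<in>V. real (degree V E v) \<le> K * real n powr (1/3 + \<epsilon>))
       \<and> (\<forall>e\<in>edges V E. real (card {C \<in> C4_copies V E. e \<in> C}) \<le> real n powr (1/3 + 2*\<epsilon>))
       \<longrightarrow> real (card {x \<in> hom_cycles V E (2*k). inj_on x {0..<2*k}
                \<and> (\<forall>i<2*k. real (codegree V E (x i) (x ((i + 2) mod (2*k)))) \<le> real n powr (2*\<epsilon>))})
           \<ge> 6 powr (- 2 * real k) * real n powr ((1/3 + \<epsilon>) * (2 * real k)))"
proof (intro allI impI)
  fix k :: nat assume kE: "real k \<ge> 2 / \<epsilon>"
  have eps: "\<epsilon> > 0" "K > 0" using assms by auto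
  have ke2: "real k * \<epsilon> \<ge> 2" using kE eps by (simp add: field_simps)
  have "k \<noteq> 0"
  proof
    assume "k = 0" then show False using ke2 by simp
  qed
  then have k1: "k \<ge> 1" by simp
  define c where "c = 8*K*(real k^2 + real k)"
  define N where "N = nat \<lceil>max ((9*c)^k) (2 powr (1/(2*\<epsilon>)))\<rceil> + 1"
  show "\<exists>N::nat. \<forall>n \<ge> N. \<forall>(V :: nat set) E.
       simple_graph V E \<and> card V = n
       \<and> real (card (edges V E)) \<ge> (1/6) * real n powr (4/3 + \<epsilon>)
       \<and> (\<forall>v\<in>V. real (degree V E v) \<le> K * real n powr (1/3 + \<epsilon>))
       \<and> (\<forall>e\<in>edges V E. real (card {C \<in> C4_copies V E. e \<in> C}) \<le> real n powr (1/3 + 2*\<epsilon>))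
       \<longrightarrow> real (card {x \<in> hom_cycles V E (2*k). inj_on x {0..<2*k}
                \<and> (\<forall>i<2*k. real (codegree V E (x i) (x ((i + 2) mod (2*k)))) \<le> real n powr (2*\<epsilon>))})
           \<ge> 6 powr (- 2 * real k) * real n powr ((1/3 + \<epsilon>) * (2 * real k))"
  proof (intro exI[of _ N] allI impI)
    fix n :: nat and V :: "nat set" and E
    assume nN: "n \<ge> N"
    assume hyp: "simple_graph V E \<and> card V = n
       \<and> real (card (edges V E)) \<ge> (1/6) * real n powr (4/3 + \<epsilon>)
       \<and> (\<forall>v\<in>V. real (degree V E v) \<le> K * real n powr (1/3 + \<epsilon>))
       \<and> (\<forall>e\<in>edges V E. real (card {C \<in> C4_copies V E. e \<in> C}) \<le> real n powr (1/3 + 2*\<epsilon>))"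
    then have sgr: "simple_graph V E" and cV: "card V = n"
      and ed: "real (card (edges V E)) \<ge> (1/6) * real n powr (4/3 + \<epsilon>)"
      and dg: "\<And>v. v \<in> V \<Longrightarrow> real (degree V E v) \<le> K * real n powr (1/3 + \<epsilon>)"
      and c4: "\<And>e. e \<in> edges V E \<Longrightarrow> real (card {C \<in> C4_copies V E. e \<in> C}) \<le> real n powr (1/3 + 2*\<epsilon>)"
      by auto
    interpret sg V E using sgr by unfold_locales
    have n1: "real n \<ge> 1" using nN by (simp add: N_def)
    have n0: "real n > 0" "n > 0" using n1 by auto
    have nbig1: "real n \<ge> (9*c)^k" using nN unfolding N_def by linarith
    have nbig2: "real n \<ge> 2 powr (1/(2*\<epsilon>))" using nN unfolding N_def by linarith
    define D where "D = real n powr (1/3 + \<epsilon>)"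
    have D0: "D > 0" using n0 by (simp add: D_def)
    let ?G = "{x \<in> hom_cycles V E (2*k). inj_on x {0..<2*k}
                \<and> (\<forall>i<2*k. real (codegree V E (x i) (x ((i + 2) mod (2*k)))) \<le> real n powr (2*\<epsilon>))}"
    have tgt: "6 powr (- 2 * real k) * real n powr ((1/3 + \<epsilon>) * (2 * real k)) = (D^2/36)^k"
    proof -
      have "real n powr ((1/3 + \<epsilon>) * (2 * real k)) = D powr (real (2*k))"
        by (simp add: D_def powr_powr)
      also have "\<dots> = D^(2*k)" by (rule powr_realpow[OF D0])
      finally have a: "real n powr ((1/3 + \<epsilon>) * (2 * real k)) = (D^2)^k" by (simp add: power_mult)
      have "6 powr (- 2 * real k) = 1 / 6 powr (real (2*k))" by (simp add: powr_minus_divide)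
      also have "\<dots> = 1 / 6^(2*k)" by (subst powr_realpow) auto
      also have "\<dots> = 1 / 36^k" by (simp add: power_mult)
      finally show ?thesis using a by (simp add: power_divide)
    qed
    have Tlow: "tg k \<ge> (D^2/9)^k"
    proof -
      have e0: "(1/6) * real n powr (4/3 + \<epsilon>) \<ge> 0" by simp
      have t1: "tg k \<ge> ((2*((1/6) * real n powr (4/3 + \<epsilon>))/n)^2)^k"
        by (rule tg_lower[OF k1 cV n0(2) ed e0])
      have eq: "2*((1/6) * real n powr (4/3 + \<epsilon>))/n = D/3"
      proof -
        have ex: "4/3 + \<epsilon> = 1 + (1/3 + \<epsilon>)" by simp
        have "real n powr (4/3 + \<epsilon>) = real n powr 1 * real n powr (1/3 + \<epsilon>)"
          unfolding ex by (rule powr_add)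
        then show ?thesis using n0 by (simp add: D_def)
      qed
      have "tg k \<ge> ((D/3)^2)^k" using t1 unfolding eq .
      moreover have "((D/3)^2)^k = (D^2/9)^k" by (simp add: power_divide)
      ultimately show ?thesis by simp
    qed
    show "real (card ?G) \<ge> 6 powr (- 2 * real k) * real n powr ((1/3 + \<epsilon>) * (2 * real k))"
    proof (cases "k = 1")
      case True
      have eps2: "\<epsilon> \<ge> 2" using ke2 True by simp
      have "hom_cycles V E (2*k) \<subseteq> ?G"
      proof
        fix x assume x: "x \<in> hom_cycles V E (2*k)"
        have "\<forall>i<2. E (x i) (x ((i + 1) mod 2))" using x True by (simp add: hom_cycles_def)
        then have e01: "E (x 0) (x 1)" by (metis add_0 mod_less one_less_numeral_iff semiring_norm(76) zero_less_numeral)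
        have "x 0 \<noteq> x 1" using e01 Eirr by metis
        then have "inj_on x {0..<2*k}" using True by (auto simp: inj_on_def less_2_cases_iff)
        moreover have "real (codegree V E (x i) (x ((i + 2) mod (2*k)))) \<le> real n powr (2*\<epsilon>)" if "i < 2*k" for i
        proof -
          have "(i+2) mod (2*k) = i" using that True by auto
          then have "codegree V E (x i) (x ((i + 2) mod (2*k))) = degree V E (x i)" by (simp add: cd_deg)
          also have "\<dots> \<le> card V" unfolding degree_def using finV by (intro card_mono) auto
          finally have "real (codegree V E (x i) (x ((i + 2) mod (2*k)))) \<le> real n" using cV by simp
          also have "real n = real n powr 1" using n0 by simp
          also have "\<dots> \<le> real n powr (2*\<epsilon>)" using n1 eps2 by (intro powr_mono) auto
          finally show ?thesis .
        qed
        ultimately show "x \<in> ?G" using x by auto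
      qed
      then have "card (hom_cycles V E (2*k)) \<le> card ?G" by (intro card_mono) (auto intro: finite_subset[OF _ H_fin])
      then have "tg k \<le> real (card ?G)" using cardH[OF k1] by simp
      moreover have "(D^2/36)^k \<le> (D^2/9)^k" using D0 by (intro power_mono) auto
      ultimately show ?thesis using tgt Tlow by linarith
    next
      case False
      then have k2: "k \<ge> 2" using k1 by simp
      define \<tau> where "\<tau> = real n powr (2*\<epsilon>)"
      define M where "M = real n powr (1/3 + 2*\<epsilon>)"
      define \<Delta> where "\<Delta> = K * D"
      define T where "T = tg k"
      define S where "S = tg (k-1)"
      define \<beta> where "\<beta> = 4*real k^2*\<Delta> + 2*real k*(\<Delta>*M/(\<tau>-1))"
      have tau2: "\<tau> \<ge> 2"
      proof -
        have "2 = (2 powr (1/(2*\<epsilon>))) powr (2*\<epsilon>)" using eps by (simp add: powr_powr)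
        also have "\<dots> \<le> real n powr (2*\<epsilon>)" using nbig2 eps by (intro powr_mono2) auto
        finally show ?thesis by (simp add: \<tau>_def)
      qed
      have M0: "M \<ge> 0" by (simp add: M_def)
      have Dl0: "\<Delta> \<ge> 0" using D0 eps by (simp add: \<Delta>_def)
      have main: "T - \<beta> * S \<le> real (card ?G)"
        using main_ineq[OF k2, of \<tau> M \<Delta>] tau2 M0 Dl0 dg c4
        by (simp add: T_def S_def \<beta>_def \<tau>_def M_def \<Delta>_def D_def)
      have T0: "T \<ge> 0" by (simp add: T_def tg_nn)
      have S0: "S \<ge> 0" by (simp add: S_def tg_nn)
      have Sk: "S^k \<le> real n * T^(k-1)"
        using lc_D2[of tg, OF tg_nn tg_lc k1] by (simp add: S_def T_def tg0 cV)
      define p where "p = real n powr (1/3)"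
      define q where "q = real n powr \<epsilon>"
      have p0: "p > 0" and q0: "q > 0" using n0 by (auto simp: p_def q_def)
      have Dpq: "D = p * q" by (simp add: D_def p_def q_def powr_add)
      have Mtau: "M / (\<tau> - 1) \<le> 2 * p"
      proof -
        have "M = p * \<tau>" by (simp add: M_def p_def \<tau>_def powr_add)
        moreover have "\<tau> \<le> 2 * (\<tau> - 1)" using tau2 by simp
        ultimately have "M \<le> 2 * p * (\<tau> - 1)" using p0 by (simp add: mult_left_mono)
        then show ?thesis using tau2 by (simp add: field_simps)
      qed
      have p1: "p \<ge> 1" using n1 by (simp add: p_def ge_one_powr_ge_zero)
      have beta: "2*\<beta> \<le> c * p^2 * q"
      proof -
        have "2*\<beta> = 8*real k^2*\<Delta> + 4*real k*\<Delta>*(M/(\<tau>-1))" by (simp add: \<beta>_def algebra_simps)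
        also have "\<dots> \<le> 8*real k^2*\<Delta>*p + 4*real k*\<Delta>*(2*p)"
        proof (rule add_mono)
          have "8*real k^2*\<Delta>*1 \<le> 8*real k^2*\<Delta>*p" by (rule mult_left_mono) (use p1 Dl0 in auto)
          then show "8*real k^2*\<Delta> \<le> 8*real k^2*\<Delta>*p" by simp
          show "4*real k*\<Delta>*(M/(\<tau>-1)) \<le> 4*real k*\<Delta>*(2*p)" by (rule mult_left_mono) (use Mtau Dl0 in auto)
        qed
        also have "\<dots> = c * p^2 * q" using eps by (simp add: c_def \<Delta>_def Dpq algebra_simps power2_eq_square)
        finally show ?thesis .
      qed
      have beta0: "\<beta> \<ge> 0" using Dl0 M0 tau2 by (simp add: \<beta>_def)
      have c0: "c \<ge> 0" using eps by (simp add: c_def)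
      have qk: "q^k \<ge> real n^2"
      proof -
        have "q^k = real n powr (\<epsilon> * real k)" using n0 by (simp add: q_def powr_realpow[symmetric] powr_powr)
        also have "\<dots> \<ge> real n powr 2" using n1 ke2 by (intro powr_mono) (auto simp: mult.commute)
        finally show ?thesis using n0 by (simp add: powr_realpow)
      qed
      have pn: "p^3 = real n" using n0 by (simp add: p_def powr_realpow[symmetric] powr_powr)
      have key: "(2*\<beta>)^k * real n \<le> (D^2/9)^k"
      proof -
        have "(2*\<beta>)^k * real n \<le> (c * p^2 * q)^k * real n"
          using beta beta0 n0 by (intro mult_right_mono power_mono) auto
        also have "\<dots> = (9*c)^k * real n * ((p^2*q)^k / 9^k)" by (simp add: power_mult_distrib power_divide)
        also have "\<dots> \<le> real n * real n * ((p^2*q)^k / 9^k)"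
          using nbig1 n0 p0 q0 by (intro mult_right_mono) auto
        also have "\<dots> \<le> q^k * ((p^2*q)^k / 9^k)"
          using qk p0 q0 by (intro mult_right_mono) (auto simp: power2_eq_square)
        also have "\<dots> = (D^2/9)^k" by (simp add: Dpq power_mult_distrib power_divide power2_eq_square)
        finally show ?thesis .
      qed
      have "(2*\<beta>*S)^k \<le> T^k"
      proof -
        have "(2*\<beta>*S)^k = (2*\<beta>)^k * S^k" by (simp add: power_mult_distrib)
        also have "\<dots> \<le> (2*\<beta>)^k * (real n * T^(k-1))" using Sk beta0 by (intro mult_left_mono) auto
        also have "\<dots> = ((2*\<beta>)^k * real n) * T^(k-1)" by simp
        also have "\<dots> \<le> T * T^(k-1)" using key Tlow T0 by (intro mult_right_mono) (auto simp: T_def)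
        also have "\<dots> = T^k" using k1 by (cases k) auto
        finally show "(2*\<beta>*S)^k \<le> T^k" .
      qed
      then have "2*\<beta>*S \<le> T" using power_le_imp_le_base[of "2*\<beta>*S" "k-1" T] k1 T0 by simp
      then have "T / 2 \<le> real (card ?G)" using main by linarith
      moreover have "(D^2/36)^k \<le> T / 2"
      proof -
        have "(D^2/9)^k = 4^k * (D^2/36)^k" by (simp add: power_mult_distrib[symmetric])
        moreover have "(4::real)^k \<ge> 2"
        proof -
          have "(4::real)^1 \<le> 4^k" using k1 by (intro power_increasing) auto
          then show ?thesis by simp
        qed
        moreover have "(D^2/36)^k \<ge> 0" by simp
        ultimately have "(D^2/9)^k \<ge> 2 * (D^2/36)^k" by (metis mult_right_mono)
        then show ?thesis using Tlow by (simp add: T_def)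
      qed
      ultimately show ?thesis using tgt by linarith
    qed
  qed
qed

end
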